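(* Let $m\neq n$ be positive integers and let $g,h\in\mathrm{Homeo}_+(S^1)$ satisfy $gh^mg^{-1}=h^n$. Then $h$ has a periodic point whose period divides $|n-m|$.
   Context: $\mathrm{Homeo}_+(S^1)$ is the group of orientation-preserving homeomorphisms of $S^1$. *)

theory Defs
  imports "HOL-Analysis.Analysis"
begin

definition circle :: "complex set" where
  "circle = sphere 0 1"

text \<open>Orientation-preserving homeomorphisms of S^1: homeomorphisms of the circle
  admitting a lift to an increasing homeomorphism F of R commuting with
  translation by 1, with respect to the covering map x \<mapsto> exp(2 pi i x).\<close>
definition homeo_plus_S1 :: "(complex \<Rightarrow> complex) \<Rightarrow> bool" where
  "homeo_plus_S1 h \<longleftrightarrow>
     (\<exists>h'. homeomorphism circle circle h h') \<and>
     (\<exists>F :: real \<Rightarrow> real. continuous_on UNIV F \<and> strict_mono F \<and>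
        (\<forall>x. F (x + 1) = F x + 1) \<and>
        (\<forall>x. h (cis (2 * pi * x)) = cis (2 * pi * F x)))"

definition periodic_point_of_period ::
  "('a \<Rightarrow> 'a) \<Rightarrow> 'a \<Rightarrow> nat \<Rightarrow> bool" where
  "periodic_point_of_period h x p \<longleftrightarrow>
     p > 0 \<and> (h ^^ p) x = x \<and> (\<forall>j. 0 < j \<and> j < p \<longrightarrow> (h ^^ j) x \<noteq> x)"

end

theory Submission
  imports Defs
begin

lemma cis_eq_int: "cis (2*pi*x) = cis (2*pi*y) \<Longrightarrow> x - y \<in> \<int>"
proof -
  assume a: "cis (2*pi*x) = cis (2*pi*y)"
  have "cis (2*pi*x - 2*pi*y) = cis (2*pi*x) * cis (- (2*pi*y))"
    by (simp add: cis_mult)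
  also have "\<dots> = 1" using a by (simp add: cis_mult)
  finally have "Re (cis (2*pi*x - 2*pi*y)) = 1" by simp
  then have "cos (2*pi*x - 2*pi*y) = 1" by simp
  then obtain k where "2*pi*x - 2*pi*y = real_of_int k * 2 * pi"
    using cos_one_2pi_int by blast
  then have "2*pi*(x - y) = 2*pi*real_of_int k" by (simp add: algebra_simps)
  then have "x - y = real_of_int k" by simp
  then show ?thesis by simp
qed

lemma cis_shift: "k \<in> \<int> \<Longrightarrow> cis (2*pi*(x + k)) = cis (2*pi*x)"
  by (simp add: distrib_left cis_mult[symmetric])

lemma lift_int:
  fixes F :: "real \<Rightarrow> real"
  assumes tr: "\<forall>x. F (x+1) = F x + (1::real)"
  shows "F (x + real_of_int k) = F x + real_of_int k"
proof -
  have nat: "F (y + real j) = F y + real j" for y j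
  proof (induction j)
    case 0 then show ?case by simp
  next
    case (Suc j)
    have "F (y + real (Suc j)) = F ((y + real j) + 1)" by (simp add: algebra_simps)
    also have "\<dots> = F (y + real j) + 1" using tr by blast
    finally show ?case using Suc by simp
  qed
  show ?thesis
  proof (cases "k \<ge> 0")
    case True
    have e: "real (nat k) = real_of_int k" using True by simp
    have "F (x + real (nat k)) = F x + real (nat k)" by (rule nat)
    then show ?thesis unfolding e .
  next
    case False
    have e: "real (nat (-k)) = - real_of_int k" using False by simp
    have "F (x + real_of_int k + real (nat (-k))) = F (x + real_of_int k) + real (nat (-k))"
      by (rule nat)
    then have "F (x + real_of_int k + - real_of_int k) = F (x + real_of_int k) + - real_of_int k"
      unfolding e .
    then show ?thesis by simp
  qed
qed

lemma funpow_lift: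
  fixes F :: "real \<Rightarrow> real"
  assumes tr: "\<forall>x. F (x+1) = F x + (1::real)"
  shows "\<forall>x. (F^^j) (x+1) = (F^^j) x + 1"
proof (induction j)
  case 0 then show ?case by simp
next
  case (Suc j)
  show ?case
  proof
    fix x
    have "(F^^Suc j) (x+1) = F ((F^^j) x + 1)" using Suc by simp
    also have "\<dots> = (F^^Suc j) x + 1" using tr by simp
    finally show "(F^^Suc j) (x+1) = (F^^Suc j) x + 1" .
  qed
qed

lemma funpow_mono':
  assumes "mono (F :: real \<Rightarrow> real)"
  shows "mono (F^^j)"
proof (induction j)
  case 0 then show ?case by (simp add: mono_def)
next
  case (Suc j)
  then show ?case using assms by (auto simp: mono_def)
qed

lemma funpow_cont:
  assumes "continuous_on UNIV (F :: real \<Rightarrow> real)"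
  shows "continuous_on UNIV (F^^j)"
proof (induction j)
  case 0 then show ?case by (simp add: continuous_on_id)
next
  case (Suc j)
  have "continuous_on UNIV (F \<circ> (F^^j))"
    by (rule continuous_on_compose[OF Suc continuous_on_subset[OF assms]]) simp
  then show ?case by simp
qed

lemma disp:
  assumes m: "mono (P :: real \<Rightarrow> real)" and tr: "\<forall>x. P (x+1) = P x + 1"
  shows "P x - x \<le> P y - y + 1"
proof -
  define k where "k = floor (x - y)"
  define x' where "x' = x - real_of_int k"
  have "P x = P (x' + real_of_int k)" by (simp add: x'_def)
  also have "\<dots> = P x' + real_of_int k" using lift_int[OF tr] by blast
  finally have px: "P x = P x' + real_of_int k" .
  have "y \<le> x'" "x' \<le> y + 1" unfolding x'_def k_def
    by linarith+
  then have "P x' \<le> P (y+1)" using m by (simp add: monoD)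
  then have "P x' \<le> P y + 1" using tr by simp
  then show ?thesis using px \<open>y \<le> x'\<close> unfolding x'_def by linarith
qed

lemma iter_rel:
  assumes tr: "\<forall>x. F (x+1) = F x + (1::real)"
    and rel: "\<forall>x. G ((F^^m) x) = (F^^n) (G x) + real_of_int k"
  shows "G ((F^^(m*t)) x) = (F^^(n*t)) (G x) + real t * real_of_int k"
proof (induction t)
  case 0 then show ?case by simp
next
  case (Suc t)
  have "G ((F^^(m*Suc t)) x) = G ((F^^m) ((F^^(m*t)) x))"
    by (simp add: funpow_add)
  also have "\<dots> = (F^^n) (G ((F^^(m*t)) x)) + real_of_int k" using rel by blast
  also have "\<dots> = (F^^n) ((F^^(n*t)) (G x) + real_of_int (int t * k)) + real_of_int k"
    using Suc by simp
  also have "\<dots> = (F^^n) ((F^^(n*t)) (G x)) + real_of_int (int t * k) + real_of_int k"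
    using lift_int[OF funpow_lift[OF tr], of n "(F^^(n*t)) (G x)" "int t * k"] by simp
  also have "\<dots> = (F^^(n*Suc t)) (G x) + real (Suc t) * real_of_int k"
    by (simp add: funpow_add algebra_simps)
  finally show ?case .
qed

lemma half_not_int:
  assumes "(u::real) \<in> \<int>" shows "u + 1/2 \<notin> \<int>"
proof
  assume "u + 1/2 \<in> \<int>"
  then obtain j where j: "u + 1/2 = real_of_int j" by (auto elim: Ints_cases)
  obtain i where i: "u = real_of_int i" using assms by (auto elim: Ints_cases)
  have "real_of_int (2*i+1) = real_of_int (2*j)" using i j by simp
  then have "2*i+1 = 2*j" by (simp only: of_int_eq_iff)
  then show False by presburger
qed

lemma core:
  assumes cont: "continuous_on UNIV (F :: real \<Rightarrow> real)" and mo: "mono F"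
    and tr: "\<forall>x. F (x+1) = F x + 1" and d: "d > 0"
    and est: "\<forall>t::nat. \<exists>y. \<bar>(F^^(d*t)) y - y - real t * real_of_int \<kappa>\<bar> \<le> 2"
  shows "\<exists>x. (F^^d) x - x \<in> \<int>"
proof (rule ccontr)
  assume no: "\<not> (\<exists>x. (F^^d) x - x \<in> \<int>)"
  define \<phi> where "\<phi> = (\<lambda>x. (F^^d) x - x)"
  have \<phi>cont: "continuous_on UNIV \<phi>"
    unfolding \<phi>_def by (intro continuous_intros funpow_cont cont)
  have \<phi>per: "\<phi> (x + real_of_int j) = \<phi> x" for x j
    unfolding \<phi>_def using lift_int[OF funpow_lift[OF tr]] by simp
  have conn: "connected (range \<phi>)"
    by (rule connected_continuous_image[OF \<phi>cont connected_UNIV])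
  define p where "p = floor (\<phi> 0)"
  have noint: "\<phi> x \<noteq> real_of_int j" for x j
    using no unfolding \<phi>_def by (metis Ints_of_int)
  have p0: "real_of_int p < \<phi> 0" "\<phi> 0 < real_of_int p + 1"
    using noint[of 0 p] unfolding p_def by linarith+
  have bnd: "real_of_int p < \<phi> x \<and> \<phi> x < real_of_int p + 1" for x
  proof (rule ccontr)
    assume "\<not> ?thesis"
    then consider "\<phi> x \<le> real_of_int p" | "\<phi> x \<ge> real_of_int p + 1" by linarith
    then show False
    proof cases
      case 1
      have "real_of_int p \<in> range \<phi>"
        by (rule connectedD_interval[OF conn, of "\<phi> x" "\<phi> 0"]) (use 1 p0 in auto)
      then show False using noint by (metis imageE)
    next
      case 2
      have "real_of_int (p+1) \<in> range \<phi>"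
        by (rule connectedD_interval[OF conn, of "\<phi> 0" "\<phi> x"]) (use 2 p0 in auto)
      then show False using noint by (metis imageE)
    qed
  qed
  obtain x0 where x0: "\<forall>y\<in>{0..1}. \<phi> x0 \<le> \<phi> y"
    using continuous_attains_inf[OF compact_Icc, of 0 1 \<phi>] continuous_on_subset[OF \<phi>cont]
    by auto
  obtain x1 where x1: "\<forall>y\<in>{0..1}. \<phi> y \<le> \<phi> x1"
    using continuous_attains_sup[OF compact_Icc, of 0 1 \<phi>] continuous_on_subset[OF \<phi>cont]
    by auto
  define a where "a = \<phi> x0"
  define b where "b = \<phi> x1"
  have ab: "a \<le> \<phi> y \<and> \<phi> y \<le> b" for y
  proof -
    have "y - real_of_int (floor y) \<in> {0..1}" by auto linarith
    moreover have "\<phi> y = \<phi> (y - real_of_int (floor y))"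
      using \<phi>per[of "y - real_of_int (floor y)" "floor y"] by simp
    ultimately show ?thesis using x0 x1 a_def b_def by auto
  qed
  have pa: "real_of_int p < a" "b < real_of_int p + 1" using bnd a_def b_def by auto
  have iter: "real t * a \<le> (F^^(d*t)) y - y \<and> (F^^(d*t)) y - y \<le> real t * b" for t y
  proof (induction t arbitrary: y)
    case 0 then show ?case by simp
  next
    case (Suc t)
    have e: "(F^^(d*Suc t)) y = (F^^d) ((F^^(d*t)) y)" by (simp add: funpow_add)
    have "(F^^(d*Suc t)) y - y = \<phi> ((F^^(d*t)) y) + ((F^^(d*t)) y - y)"
      unfolding e \<phi>_def by simp
    then show ?case using Suc[of y] ab[of "(F^^(d*t)) y"] by (simp add: algebra_simps)
  qed
  have ha: "real t * (a - real_of_int \<kappa>) \<le> 2" for t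
  proof -
    obtain y where "\<bar>(F^^(d*t)) y - y - real t * real_of_int \<kappa>\<bar> \<le> 2" using est by blast
    then show ?thesis using iter[of t y] by (simp add: algebra_simps abs_le_iff)
  qed
  have hb: "real t * (real_of_int \<kappa> - b) \<le> 2" for t
  proof -
    obtain y where "\<bar>(F^^(d*t)) y - y - real t * real_of_int \<kappa>\<bar> \<le> 2" using est by blast
    then show ?thesis using iter[of t y] by (simp add: algebra_simps abs_le_iff)
  qed
  have "a \<le> real_of_int \<kappa>"
  proof (rule ccontr)
    assume "\<not> ?thesis"
    then have pos: "a - real_of_int \<kappa> > 0" by simp
    obtain t :: nat where "2 / (a - real_of_int \<kappa>) < real t" using reals_Archimedean2 by blast
    then have "2 < real t * (a - real_of_int \<kappa>)" using pos by (simp add: field_simps)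
    then show False using ha[of t] by simp
  qed
  moreover have "real_of_int \<kappa> \<le> b"
  proof (rule ccontr)
    assume "\<not> ?thesis"
    then have pos: "real_of_int \<kappa> - b > 0" by simp
    obtain t :: nat where "2 / (real_of_int \<kappa> - b) < real t" using reals_Archimedean2 by blast
    then have "2 < real t * (real_of_int \<kappa> - b)" using pos by (simp add: field_simps)
    then show False using hb[of t] by simp
  qed
  ultimately have "p < \<kappa>" "\<kappa> < p + 1" using pa by linarith+
  then show False by simp
qed

lemma period_exists:
  assumes "(f^^d) z = z" "d > 0"
  shows "\<exists>p. periodic_point_of_period f z p \<and> p dvd d"
proof -
  define q where "q = (LEAST j. 0 < j \<and> (f^^j) z = z)"
  have Pq: "0 < q \<and> (f^^q) z = z"
    unfolding q_def by (rule LeastI[of _ d]) (use assms in simp)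
  have small: "\<not> (0 < j \<and> (f^^j) z = z)" if "j < q" for j
    using not_less_Least[of j "\<lambda>j. 0 < j \<and> (f^^j) z = z"] that unfolding q_def by blast
  have mult: "(f^^(q*r)) z = z" for r
  proof (induction r)
    case 0 then show ?case by simp
  next
    case (Suc r)
    have "(f^^(q*Suc r)) z = (f^^q) ((f^^(q*r)) z)" by (simp add: funpow_add)
    then show ?case using Suc Pq by simp
  qed
  have dq: "d mod q + q * (d div q) = d" by simp
  have "(f^^(d mod q + q * (d div q))) z = (f^^(d mod q)) ((f^^(q * (d div q))) z)"
    by (simp only: funpow_add comp_apply)
  then have "(f^^d) z = (f^^(d mod q)) ((f^^(q * (d div q))) z)" unfolding dq .
  then have "z = (f^^(d mod q)) z" unfolding mult[of "d div q"] assms(1) .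
  then have "(f^^(d mod q)) z = z" by (rule sym)
  moreover have "d mod q < q" using Pq by simp
  ultimately have "d mod q = 0"
  proof -
    assume h1: "(f^^(d mod q)) z = z" and h2: "d mod q < q"
    show "d mod q = 0"
    proof (rule ccontr)
      assume "d mod q \<noteq> 0"
      then have "0 < d mod q" by simp
      then show False using small[OF h2] h1 by simp
    qed
  qed
  then have "q dvd d" by (simp add: dvd_eq_mod_eq_0)
  moreover have "periodic_point_of_period f z q"
    unfolding periodic_point_of_period_def using Pq small by blast
  ultimately show ?thesis by blast
qed

theorem lemma5p5:
  fixes m n :: nat and g h :: "complex \<Rightarrow> complex"
  assumes "m > 0" and "n > 0" and "m \<noteq> n"
    and "homeo_plus_S1 g" and "homeo_plus_S1 h"
    and "\<forall>z\<in>circle. g ((h ^^ m) (inv_into circle g z)) = (h ^^ n) z"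
  shows "\<exists>x\<in>circle. \<exists>p. periodic_point_of_period h x p \<and>
           p dvd nat \<bar>int n - int m\<bar>"
proof -
  note hyp = assms(6)
  have H4: "(\<exists>h'. homeomorphism circle circle g h') \<and>
     (\<exists>F :: real \<Rightarrow> real. continuous_on UNIV F \<and> strict_mono F \<and>
        (\<forall>x. F (x + 1) = F x + 1) \<and>
        (\<forall>x. g (cis (2 * pi * x)) = cis (2 * pi * F x)))"
    using assms(4) unfolding homeo_plus_S1_def .
  have H5: "\<exists>F :: real \<Rightarrow> real. continuous_on UNIV F \<and> strict_mono F \<and>
        (\<forall>x. F (x + 1) = F x + 1) \<and>
        (\<forall>x. h (cis (2 * pi * x)) = cis (2 * pi * F x))"
    using assms(5) unfolding homeo_plus_S1_def by (rule conjunct2)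
  from conjunct1[OF H4] obtain g' where hg: "homeomorphism circle circle g g'" ..
  from conjunct2[OF H4] obtain G :: "real \<Rightarrow> real" where
    GG: "continuous_on UNIV G \<and> strict_mono G \<and> (\<forall>x. G (x + 1) = G x + 1) \<and>
        (\<forall>x. g (cis (2 * pi * x)) = cis (2 * pi * G x))" ..
  from H5 obtain F :: "real \<Rightarrow> real" where
    FF: "continuous_on UNIV F \<and> strict_mono F \<and> (\<forall>x. F (x + 1) = F x + 1) \<and>
        (\<forall>x. h (cis (2 * pi * x)) = cis (2 * pi * F x))" ..
  have Gc: "continuous_on UNIV G" and Gs: "strict_mono G" and Gt: "\<forall>x. G (x + 1) = G x + 1"
    and Gl: "\<forall>x. g (cis (2 * pi * x)) = cis (2 * pi * G x)" using GG by simp_all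
  have Fc: "continuous_on UNIV F" and Fs: "strict_mono F" and Ft: "\<forall>x. F (x + 1) = F x + 1"
    and Fl: "\<forall>x. h (cis (2 * pi * x)) = cis (2 * pi * F x)" using FF by simp_all
  have Gm: "mono G" using Gs by (simp add: monoI strict_mono_less_eq)
  have Fm: "mono F" using Fs by (simp add: monoI strict_mono_less_eq)
  have cin: "cis a \<in> circle" for a unfolding circle_def by simp
  have hl: "(h^^j) (cis (2*pi*x)) = cis (2*pi*(F^^j) x)" for j x
    by (induction j) (auto simp: Fl)
  have ginj: "inj_on g circle"
    using hg by (metis homeomorphism_apply1 inj_on_inverseI)
  have ginv: "inv_into circle g (cis (2*pi*G x)) = cis (2*pi*x)" for x
    using inv_into_f_f[OF ginj cin[of "2*pi*x"]] Gl by simp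
  have relint: "G ((F^^m) x) - (F^^n) (G x) \<in> \<int>" for x
  proof -
    have "g ((h ^^ m) (inv_into circle g (cis (2*pi*G x)))) = (h ^^ n) (cis (2*pi*G x))"
      using hyp cin by blast
    then have "cis (2*pi*G ((F^^m) x)) = cis (2*pi*(F^^n) (G x))"
      using ginv hl Gl by simp
    then show ?thesis by (rule cis_eq_int)
  qed
  define \<psi> where "\<psi> = (\<lambda>x. G ((F^^m) x) - (F^^n) (G x))"
  have c1: "continuous_on UNIV (G \<circ> (F^^m))"
    by (rule continuous_on_compose[OF funpow_cont[OF Fc] continuous_on_subset[OF Gc]]) simp
  have c2: "continuous_on UNIV ((F^^n) \<circ> G)"
    by (rule continuous_on_compose[OF Gc continuous_on_subset[OF funpow_cont[OF Fc]]]) simp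
  have \<psi>c: "continuous_on UNIV \<psi>"
    unfolding \<psi>_def using continuous_on_diff[OF c1 c2] by (simp add: o_def)
  have conn: "connected (range \<psi>)"
    by (rule connected_continuous_image[OF \<psi>c connected_UNIV])
  have \<psi>int: "\<psi> y \<in> \<int>" for y
    unfolding \<psi>_def by (rule relint)
  have \<psi>const: "\<psi> x = \<psi> 0" for x
  proof (rule ccontr)
    assume ne: "\<psi> x \<noteq> \<psi> 0"
    have i0: "\<psi> 0 \<in> \<int>" and ix: "\<psi> x \<in> \<int>" by (rule \<psi>int)+
    obtain a where a: "\<psi> 0 = real_of_int a" using i0 unfolding Ints_def by blast
    obtain b where b: "\<psi> x = real_of_int b" using ix unfolding Ints_def by blast
    show False
    proof (cases "b < a")
      case True
      then have ba: "real_of_int b + 1 \<le> real_of_int a" by linarith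
      have "\<psi> x + 1/2 \<in> range \<psi>"
        by (rule connectedD_interval[OF conn rangeI[of \<psi> x] rangeI[of \<psi> 0]]) (use a b ba in linarith)+
      then obtain u where u: "\<psi> u = \<psi> x + 1/2" by (metis imageE)
      then show False using half_not_int[OF ix] \<psi>int[of u] by metis
    next
      case False
      then have "a < b" using a b ne by linarith
      then have ab: "real_of_int a + 1 \<le> real_of_int b" by linarith
      have "\<psi> 0 + 1/2 \<in> range \<psi>"
        by (rule connectedD_interval[OF conn rangeI[of \<psi> 0] rangeI[of \<psi> x]]) (use a b ab in linarith)+
      then obtain u where u: "\<psi> u = \<psi> 0 + 1/2" by (metis imageE)
      then show False using half_not_int[OF i0] \<psi>int[of u] by metis
    qed
  qed
  obtain k where k: "\<psi> 0 = real_of_int k" using \<psi>int[of 0] unfolding Ints_def by blast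
  have rel: "\<forall>x. G ((F^^m) x) = (F^^n) (G x) + real_of_int k"
  proof
    fix x
    have "G ((F^^m) x) - (F^^n) (G x) = real_of_int k"
      using \<psi>const[of x] k unfolding \<psi>_def by simp
    then show "G ((F^^m) x) = (F^^n) (G x) + real_of_int k" by simp
  qed
  have it: "G ((F^^(m*t)) x) = (F^^(n*t)) (G x) + real t * real_of_int k" for t x
    by (rule iter_rel[OF Ft rel])
  have Gd: "G u - u \<le> G v - v + 1" for u v by (rule disp[OF Gm Gt])
  have Fd: "(F^^j) u - u \<le> (F^^j) v - v + 1" for j u v
    by (rule disp[OF funpow_mono'[OF Fm] funpow_lift[OF Ft]])
  define d where "d = nat \<bar>int n - int m\<bar>"
  have dpos: "d > 0" using assms(3) unfolding d_def by simp
  have "\<exists>x. (F^^d) x - x \<in> \<int>"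
  proof (cases "m < n")
    case True
    then have dd: "n = d + m" unfolding d_def by simp
    show ?thesis
    proof (rule core[OF Fc Fm Ft dpos, of "-k"], intro allI)
      fix t
      let ?A = "(F^^(m*t)) 0" and ?B = "(F^^(n*t)) 0" and ?C = "(F^^(n*t)) (G 0)"
      have "n*t = d*t + m*t" unfolding dd by (simp add: add_mult_distrib)
      then have e: "(F^^(d*t)) ?A = ?B" by (simp add: funpow_add)
      have "G ?A = ?C + real t * real_of_int k" by (rule it)
      moreover have "G ?A - ?A \<le> G 0 - 0 + 1" "G 0 - 0 \<le> G ?A - ?A + 1" using Gd[of ?A 0] Gd[of 0 ?A] by simp_all
      moreover have "?C - G 0 \<le> ?B - 0 + 1" "?B - 0 \<le> ?C - G 0 + 1" using Fd[of "n*t" "G 0" 0] Fd[of "n*t" 0 "G 0"] by simp_all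
      moreover have "real t * real_of_int (-k) = - (real t * real_of_int k)" by simp
      ultimately have "\<bar>?B - ?A - real t * real_of_int (-k)\<bar> \<le> 2" unfolding abs_le_iff by linarith
      then show "\<exists>y. \<bar>(F^^(d*t)) y - y - real t * real_of_int (-k)\<bar> \<le> 2"
        using e by (intro exI[of _ ?A]) simp
    qed
  next
    case False
    then have dd: "m = d + n" using assms(3) unfolding d_def by simp
    show ?thesis
    proof (rule core[OF Fc Fm Ft dpos, of "k"], intro allI)
      fix t
      let ?A = "(F^^(m*t)) 0" and ?B = "(F^^(n*t)) 0" and ?C = "(F^^(n*t)) (G 0)"
      have "m*t = d*t + n*t" unfolding dd by (simp add: add_mult_distrib)
      then have e: "(F^^(d*t)) ?B = ?A" by (simp add: funpow_add)
      have "G ?A = ?C + real t * real_of_int k" by (rule it)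
      moreover have "G ?A - ?A \<le> G 0 - 0 + 1" "G 0 - 0 \<le> G ?A - ?A + 1" using Gd[of ?A 0] Gd[of 0 ?A] by simp_all
      moreover have "?C - G 0 \<le> ?B - 0 + 1" "?B - 0 \<le> ?C - G 0 + 1" using Fd[of "n*t" "G 0" 0] Fd[of "n*t" 0 "G 0"] by simp_all
      ultimately have "\<bar>?A - ?B - real t * real_of_int k\<bar> \<le> 2" unfolding abs_le_iff by linarith
      then show "\<exists>y. \<bar>(F^^(d*t)) y - y - real t * real_of_int k\<bar> \<le> 2"
        using e by (intro exI[of _ ?B]) simp
    qed
  qed
  then obtain x where x: "(F^^d) x - x \<in> \<int>" by blast
  have e1: "(h^^d) (cis (2*pi*x)) = cis (2*pi*(F^^d) x)" by (rule hl)
  have e2: "cis (2*pi*(x + ((F^^d) x - x))) = cis (2*pi*x)" by (rule cis_shift[OF x])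
  have e3: "x + ((F^^d) x - x) = (F^^d) x" by simp
  have hfix: "(h^^d) (cis (2*pi*x)) = cis (2*pi*x)" using e1 e2 unfolding e3 by simp
  obtain p where p1: "periodic_point_of_period h (cis (2*pi*x)) p" and p2: "p dvd d"
    using period_exists[OF hfix dpos] by blast
  have p3: "p dvd nat \<bar>int n - int m\<bar>" using p2 by (simp only: d_def)
  have cc: "cis (2*pi*x) \<in> circle" by (rule cin)
  show ?thesis
    using cc p1 p3 by blast
qed

end
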